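(* Let $f_1,\dots,f_n\colon\mathbb{R}\to\mathbb{R}$ be differentiable and Lipschitz continuous, each having only finitely many zeros, with $f_i'(q)\neq 0$ at every zero $q$ of $f_i$. Let $\mathcal{Z}=\bigcap_{i\in[n]}\{z: f_i(z)<0\}$ and let $z^{\mathrm{obs}}\in\mathcal{Z}$. Fix $\varepsilon_{\max}>0$. For $\varepsilon_{\min}\in(0,\varepsilon_{\max}]$ and $S>0$, let $p_{\mathrm{grid}}=p_{\mathrm{grid}}(\varepsilon_{\min},S)$ be the output of the adaptive grid procedure described in the context, using the grid width $d(\cdot)$ defined there. Then there exist constants $C>0$, $\varepsilon_0>0$, $S_0>0$ (independent of $\varepsilon_{\min}$ and $S$) such that for all $\varepsilon_{\min}\in(0,\varepsilon_0)$ and all $S>S_0$, $$|p_{\mathrm{selective}}-p_{\mathrm{grid}}|\le C\bigl(\varepsilon_{\min}+\exp(-S^2/2)\bigr),$$ i.e. $|p_{\mathrm{selective}}-p_{\mathrm{grid}}|=O(\varepsilon_{\min}+\exp(-S^2/2))$ as $\varepsilon_{\min}\to0$, $S\to\infty$.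
   Context: Let $W\sim\mathcal{N}(0,1)$. The selective $p$-value is $p_{\mathrm{selective}}=\mathbb{P}(|W|>|z^{\mathrm{obs}}|\mid W\in\mathcal{Z})$. For each $z\in\mathbb{R}$ and $i\in[n]$, let $L_i(z)>0$ denote a Lipschitz constant of $f_i$ on $[z-\varepsilon_{\max},z+\varepsilon_{\max}]$, and define the grid width $d(z)=\min_{i:\,f_i(z)<0}|f_i(z)|/L_i(z)$ if $z\in\mathcal{Z}$, and $d(z)=\max_{i:\,f_i(z)\ge0}|f_i(z)|/L_i(z)$ if $z\notin\mathcal{Z}$. Adaptive grid procedure: set $z_0=-S$ and, while $z_j<S$, set $z_{j+1}=z_j+\min(\varepsilon_{\max},\max(d(z_j),\varepsilon_{\min}))$. Let $d^{\mathrm{obs}}=\min(\varepsilon_{\max},d(z^{\mathrm{obs}}))$, $J(z^{\mathrm{obs}})=[z^{\mathrm{obs}}-d^{\mathrm{obs}},z^{\mathrm{obs}}+d^{\mathrm{obs}}]$, $\mathcal{Z}^{\mathrm{grid}}=\bigcup_{j:\,z_j\in\mathcal{Z}}[z_j,z_{j+1}]\cup J(z^{\mathrm{obs}})$ (union over the generated grid points), and output $p_{\mathrm{grid}}=\mathbb{P}(|W|>|z^{\mathrm{obs}}|\mid W\in\mathcal{Z}^{\mathrm{grid}})$. *)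

theory Defs
  imports "HOL-Analysis.Analysis" "HOL-Probability.Probability"
begin

definition gauss :: "real measure" where
  "gauss = density lborel std_normal_density"

definition cond_prob :: "real \<Rightarrow> real set \<Rightarrow> real" where
  "cond_prob t A = measure gauss ({w. \<bar>w\<bar> > t} \<inter> A) / measure gauss A"

definition feas :: "(nat \<Rightarrow> real \<Rightarrow> real) \<Rightarrow> nat \<Rightarrow> real set" where
  "feas f n = {z. \<forall>i<n. f i z < 0}"

definition gridw :: "(nat \<Rightarrow> real \<Rightarrow> real) \<Rightarrow> nat \<Rightarrow> (nat \<Rightarrow> real \<Rightarrow> real) \<Rightarrow> real \<Rightarrow> real" where
  "gridw f n L z =
     (if z \<in> feas f n then Min {\<bar>f i z\<bar> / L i z | i. i < n \<and> f i z < 0}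
      else Max {\<bar>f i z\<bar> / L i z | i. i < n \<and> f i z \<ge> 0})"

text \<open>Grid points z_j: z_0 = -S, z_(j+1) = z_j + min emax (max (d z_j) emin).
  The procedure generates z_(j+1) exactly when z_j < S.\<close>
definition grid_pt :: "(nat \<Rightarrow> real \<Rightarrow> real) \<Rightarrow> nat \<Rightarrow> (nat \<Rightarrow> real \<Rightarrow> real) \<Rightarrow> real \<Rightarrow> real \<Rightarrow> real \<Rightarrow> nat \<Rightarrow> real" where
  "grid_pt f n L emax emin S j =
     ((\<lambda>z. z + min emax (max (gridw f n L z) emin)) ^^ j) (- S)"

definition Zgrid :: "(nat \<Rightarrow> real \<Rightarrow> real) \<Rightarrow> nat \<Rightarrow> (nat \<Rightarrow> real \<Rightarrow> real) \<Rightarrow> real \<Rightarrow> real \<Rightarrow> real \<Rightarrow> real \<Rightarrow> real set" where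
  "Zgrid f n L emax emin S zobs =
     (\<Union>j\<in>{j. grid_pt f n L emax emin S j < S \<and> grid_pt f n L emax emin S j \<in> feas f n}.
        {grid_pt f n L emax emin S j .. grid_pt f n L emax emin S (Suc j)})
     \<union> (let dobs = min emax (gridw f n L zobs) in {zobs - dobs .. zobs + dobs})"

definition p_grid :: "(nat \<Rightarrow> real \<Rightarrow> real) \<Rightarrow> nat \<Rightarrow> (nat \<Rightarrow> real \<Rightarrow> real) \<Rightarrow> real \<Rightarrow> real \<Rightarrow> real \<Rightarrow> real \<Rightarrow> real" where
  "p_grid f n L emax emin S zobs = cond_prob \<bar>zobs\<bar> (Zgrid f n L emax emin S zobs)"

definition p_selective :: "(nat \<Rightarrow> real \<Rightarrow> real) \<Rightarrow> nat \<Rightarrow> real \<Rightarrow> real" where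
  "p_selective f n zobs = cond_prob \<bar>zobs\<bar> (feas f n)"

end

theory Submission imports Defs "HOL-Real_Asymp.Real_Asymp" begin


lemma gauss_prob: "prob_space gauss"
  unfolding gauss_def by (intro prob_space_normal_density) simp

lemma sets_gauss[simp]: "sets gauss = sets borel"
  unfolding gauss_def by simp

lemma emeasure_gauss: "A \<in> sets borel \<Longrightarrow> emeasure gauss A = (\<integral>\<^sup>+x. ennreal (std_normal_density x) * indicator A x \<partial>lborel)"
  unfolding gauss_def by (subst emeasure_density) auto

lemma gauss_eq: "emeasure gauss A = ennreal (measure gauss A)"
  using finite_measure.emeasure_eq_measure[OF prob_space.finite_measure[OF gauss_prob]] by simp

lemma gauss_interval: "a \<le> b \<Longrightarrow> measure gauss {a..b} \<le> b - a"
proof -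
  assume ab: "a \<le> b"
  have "emeasure gauss {a..b} = (\<integral>\<^sup>+x. ennreal (std_normal_density x) * indicator {a..b} x \<partial>lborel)"
    by (rule emeasure_gauss) auto
  also have "\<dots> \<le> (\<integral>\<^sup>+x. indicator {a..b} x \<partial>lborel)"
  proof (rule nn_integral_mono)
    fix x
    have "std_normal_density x \<le> 1"
    proof -
      have "exp (- x\<^sup>2 / 2) \<le> 1" by simp
      moreover have "1 / sqrt (2 * pi) \<le> 1" using pi_gt3 by (simp add: divide_le_eq)
      ultimately have "(1 / sqrt (2 * pi)) * exp (- x\<^sup>2 / 2) \<le> 1 * 1"
        by (intro mult_mono) auto
      then show ?thesis by (simp add: std_normal_density_def)
    qed
    then show "ennreal (std_normal_density x) * indicator {a..b} x \<le> indicator {a..b} x"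
      by (auto split: split_indicator simp: ennreal_le_1)
  qed
  also have "\<dots> = ennreal (b - a)" using ab by simp
  finally show ?thesis using ab by (simp add: gauss_eq ennreal_le_iff)
qed

lemma tail_gauss:
  assumes S: "S \<ge> 1"
  shows "measure gauss {w. S \<le> \<bar>w\<bar>} \<le> 2 * exp (- (S\<^sup>2) / 2)"
proof -
  define c where "c = 1 / sqrt (2 * pi)"
  have c0: "0 < c" and c1: "c \<le> 1" using pi_gt3 by (auto simp: c_def divide_le_eq)
  define g where "g x = ennreal (x * (c * exp (- x\<^sup>2 / 2))) * indicator {S..} x" for x
  have gm[measurable]: "g \<in> borel_measurable borel" unfolding g_def by measurable
  have A: "{w. S \<le> \<bar>w\<bar>} \<in> sets borel" by measurable
  have "emeasure gauss {w. S \<le> \<bar>w\<bar>} = (\<integral>\<^sup>+x. ennreal (std_normal_density x) * indicator {w. S \<le> \<bar>w\<bar>} x \<partial>lborel)"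
    by (rule emeasure_gauss[OF A])
  also have "\<dots> \<le> (\<integral>\<^sup>+x. g x + g (0 + (-1) * x) \<partial>lborel)"
  proof (rule nn_integral_mono)
    fix x :: real
    show "ennreal (std_normal_density x) * indicator {w. S \<le> \<bar>w\<bar>} x \<le> g x + g (0 + (-1) * x)"
    proof (cases "S \<le> \<bar>x\<bar>")
      case False then show ?thesis by simp
    next
      case True
      have e: "std_normal_density x = c * exp (- x\<^sup>2 / 2)" by (simp add: std_normal_density_def c_def)
      have pos: "0 \<le> c * exp (- x\<^sup>2 / 2)" using c0 by simp
      show ?thesis
      proof (cases "x \<ge> 0")
        case True2: True
        with True have "S \<le> x" by simp
        then have "c * exp (- x\<^sup>2 / 2) \<le> x * (c * exp (- x\<^sup>2 / 2))"
          using S pos by (metis mult_1 mult_right_mono order_trans)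
        then have "ennreal (std_normal_density x) * indicator {w. S \<le> \<bar>w\<bar>} x \<le> g x"
          using \<open>S \<le> x\<close> True by (simp add: g_def e ennreal_leI)
        then show ?thesis by (simp add: add_increasing2)
      next
        case False
        with True have "S \<le> - x" by simp
        then have "c * exp (- x\<^sup>2 / 2) \<le> (-x) * (c * exp (- x\<^sup>2 / 2))"
          using S pos by (metis mult_1 mult_right_mono order_trans)
        then have "ennreal (std_normal_density x) * indicator {w. S \<le> \<bar>w\<bar>} x \<le> g (0 + (-1) * x)"
          using \<open>S \<le> - x\<close> True by (simp add: g_def e ennreal_leI)
        then show ?thesis by (simp add: add_increasing)
      qed
    qed
  qed
  also have "\<dots> = (\<integral>\<^sup>+x. g x \<partial>lborel) + (\<integral>\<^sup>+x. g (0 + (-1) * x) \<partial>lborel)"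
    by (rule nn_integral_add) auto
  also have "(\<integral>\<^sup>+x. g (0 + (-1) * x) \<partial>lborel) = (\<integral>\<^sup>+x. g x \<partial>lborel)"
    using nn_integral_real_affine[OF gm, of "-1" 0] by simp
  also have "(\<integral>\<^sup>+x. g x \<partial>lborel) = ennreal (0 - (- (c * exp (- S\<^sup>2 / 2))))"
    unfolding g_def
  proof (rule nn_integral_FTC_atLeast)
    show "(\<lambda>x. x * (c * exp (- x\<^sup>2 / 2))) \<in> borel_measurable borel" by measurable
    show "\<And>x. S \<le> x \<Longrightarrow> ((\<lambda>x. - (c * exp (- x\<^sup>2 / 2))) has_real_derivative x * (c * exp (- x\<^sup>2 / 2))) (at x)"
      by (auto intro!: derivative_eq_intros simp: field_simps)
    show "\<And>x. S \<le> x \<Longrightarrow> 0 \<le> x * (c * exp (- x\<^sup>2 / 2))" using S c0 by simp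
    have "((\<lambda>x::real. - (c * exp (- x\<^sup>2 / 2))) \<longlongrightarrow> - (c * 0)) at_top"
      by real_asymp
    then show "((\<lambda>x::real. - (c * exp (- x\<^sup>2 / 2))) \<longlongrightarrow> 0) at_top" by simp
  qed
  finally have "emeasure gauss {w. S \<le> \<bar>w\<bar>} \<le> ennreal (c * exp (- S\<^sup>2 / 2)) + ennreal (c * exp (- S\<^sup>2 / 2))"
    by simp
  also have "\<dots> = ennreal (2 * (c * exp (- S\<^sup>2 / 2)))"
    using c0 by (simp add: ennreal_plus[symmetric])
  finally have "measure gauss {w. S \<le> \<bar>w\<bar>} \<le> 2 * (c * exp (- S\<^sup>2 / 2))"
    using c0 by (simp add: gauss_eq ennreal_le_iff)
  also have "\<dots> \<le> 2 * exp (- S\<^sup>2 / 2)" using c1 by simp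
  finally show ?thesis by simp
qed



lemma gauss_interval_pos:
  assumes ab: "a < b" shows "measure gauss {a..b} > 0"
proof -
  define M where "M = max \<bar>a\<bar> \<bar>b\<bar>"
  define k where "k = (1 / sqrt (2 * pi)) * exp (- M\<^sup>2 / 2)"
  have k0: "k > 0" unfolding k_def by simp
  have "ennreal (k * (b - a)) = (\<integral>\<^sup>+x. ennreal k * indicator {a..b} x \<partial>lborel)"
    using ab k0 by (simp add: nn_integral_cmult ennreal_mult)
  also have "\<dots> \<le> (\<integral>\<^sup>+x. ennreal (std_normal_density x) * indicator {a..b} x \<partial>lborel)"
  proof (rule nn_integral_mono)
    fix x
    show "ennreal k * indicator {a..b} x \<le> ennreal (std_normal_density x) * indicator {a..b} x"
    proof (cases "x \<in> {a..b}")
      case True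
      then have "\<bar>x\<bar> \<le> M" unfolding M_def by auto
      then have "x\<^sup>2 \<le> M\<^sup>2" by (metis abs_ge_zero abs_le_square_iff abs_of_nonneg order_trans)
      then have "exp (- M\<^sup>2 / 2) \<le> exp (- x\<^sup>2 / 2)" by simp
      then have "k \<le> std_normal_density x" unfolding k_def std_normal_density_def
        by (intro mult_left_mono) auto
      then show ?thesis using True by (simp add: ennreal_leI)
    qed simp
  qed
  also have "\<dots> = emeasure gauss {a..b}" by (rule emeasure_gauss[symmetric]) auto
  finally have "k * (b - a) \<le> measure gauss {a..b}" by (simp add: gauss_eq ennreal_le_iff)
  moreover have "k * (b - a) > 0" using k0 ab by simp
  ultimately show ?thesis by linarith
qed

lemma alg_bound:
  fixes a1 a2 b1 b2 m :: real
  assumes "b1 > 0" "0 \<le> a1" "a1 \<le> b1" "0 \<le> a2" "a2 \<le> b2" "\<bar>a1 - a2\<bar> \<le> m" "\<bar>b1 - b2\<bar> \<le> m"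
  shows "\<bar>a1 / b1 - a2 / b2\<bar> \<le> 2 * m / b1"
proof (cases "b2 = 0")
  case True
  then have "a2 = 0" using assms by simp
  then have e: "a1 / b1 - a2 / b2 = a1 / b1" by simp
  have "a1 / b1 \<le> 1" using assms by simp
  moreover have "b1 \<le> m" using assms True by simp
  then have "2 \<le> 2 * m / b1" using assms by (simp add: le_divide_eq)
  moreover have "0 \<le> a1 / b1" using assms by simp
  ultimately show ?thesis unfolding e by linarith
next
  case False
  then have b2: "b2 > 0" using assms by simp
  have eq: "a1 / b1 - a2 / b2 = (a1 - a2) / b1 + (a2 / b2) * ((b2 - b1) / b1)"
    using b2 assms(1) by (simp add: field_simps)
  have h1: "\<bar>(a1 - a2) / b1\<bar> \<le> m / b1" using assms by (simp add: divide_right_mono)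
  have q: "0 \<le> a2 / b2" "a2 / b2 \<le> 1" using assms b2 by auto
  have r: "\<bar>(b2 - b1) / b1\<bar> \<le> m / b1" using assms by (simp add: divide_right_mono abs_minus_commute)
  have "\<bar>(a2 / b2) * ((b2 - b1) / b1)\<bar> = (a2 / b2) * \<bar>(b2 - b1) / b1\<bar>"
    using q by (simp only: abs_mult abs_of_nonneg)
  also have "\<dots> \<le> 1 * (m / b1)"
    using q r by (intro mult_mono) auto
  finally have h2: "\<bar>(a2 / b2) * ((b2 - b1) / b1)\<bar> \<le> m / b1" by simp
  have "\<bar>a1 / b1 - a2 / b2\<bar> \<le> \<bar>(a1 - a2) / b1\<bar> + \<bar>(a2 / b2) * ((b2 - b1) / b1)\<bar>"
    unfolding eq by (rule abs_triangle_ineq)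
  also have "\<dots> \<le> m / b1 + m / b1" using h1 h2 by linarith
  finally show ?thesis by simp
qed

lemma gauss_le_diff:
  assumes "X \<in> sets borel" "Y \<in> sets borel" "D \<in> sets borel" "X - Y \<subseteq> D"
  shows "measure gauss X \<le> measure gauss Y + measure gauss D"
proof -
  interpret prob_space gauss by (rule gauss_prob)
  have "measure gauss X \<le> measure gauss (Y \<union> D)"
    using assms by (intro finite_measure_mono) auto
  also have "\<dots> \<le> measure gauss Y + measure gauss D"
    using assms by (intro measure_Un_le) auto
  finally show ?thesis .
qed

lemma cond_prob_diff:
  assumes A: "A \<in> sets borel" and B: "B \<in> sets borel" and D: "D \<in> sets borel"
    and AB: "A - B \<subseteq> D" and BA: "B - A \<subseteq> D" and pos: "measure gauss A > 0"
  shows "\<bar>cond_prob t A - cond_prob t B\<bar> \<le> 2 * measure gauss D / measure gauss A"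
proof -
  interpret prob_space gauss by (rule gauss_prob)
  have T: "{w::real. \<bar>w\<bar> > t} \<in> sets borel" by measurable
  let ?T = "{w::real. \<bar>w\<bar> > t}"
  have TA: "?T \<inter> A \<in> sets borel" "?T \<inter> B \<in> sets borel" using T A B by auto
  show ?thesis unfolding cond_prob_def
  proof (rule alg_bound[OF pos])
    show "0 \<le> measure gauss (?T \<inter> A)" "0 \<le> measure gauss (?T \<inter> B)" by auto
    show "measure gauss (?T \<inter> A) \<le> measure gauss A" using A by (intro finite_measure_mono) auto
    show "measure gauss (?T \<inter> B) \<le> measure gauss B" using B by (intro finite_measure_mono) auto
    have "measure gauss (?T \<inter> A) \<le> measure gauss (?T \<inter> B) + measure gauss D"
      using TA D AB by (intro gauss_le_diff) auto
    moreover have "measure gauss (?T \<inter> B) \<le> measure gauss (?T \<inter> A) + measure gauss D"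
      using TA D BA by (intro gauss_le_diff) auto
    ultimately show "\<bar>measure gauss (?T \<inter> A) - measure gauss (?T \<inter> B)\<bar> \<le> measure gauss D" by linarith
    have "measure gauss A \<le> measure gauss B + measure gauss D"
      using A B D AB by (intro gauss_le_diff) auto
    moreover have "measure gauss B \<le> measure gauss A + measure gauss D"
      using A B D BA by (intro gauss_le_diff) auto
    ultimately show "\<bar>measure gauss A - measure gauss B\<bar> \<le> measure gauss D" by linarith
  qed
qed



lemma fin_set: "finite {g i | i. i < (n::nat) \<and> P i}"
  by (rule finite_image_set) simp

lemma gridw_feas_le:
  assumes "z \<in> feas f n" "i < n"
  shows "gridw f n L z \<le> \<bar>f i z\<bar> / L i z"
proof -
  have "f i z < 0" using assms by (simp add: feas_def)
  then have "\<bar>f i z\<bar> / L i z \<in> {\<bar>f i z\<bar> / L i z | i. i < n \<and> f i z < 0}" using assms by blast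
  then show ?thesis using assms unfolding gridw_def
    by (simp add: Min_le[OF fin_set])
qed

lemma gridw_nonfeas:
  assumes "z \<notin> feas f n"
  shows "\<exists>i<n. f i z \<ge> 0 \<and> gridw f n L z = \<bar>f i z\<bar> / L i z"
proof -
  let ?A = "{\<bar>f i z\<bar> / L i z | i. i < n \<and> f i z \<ge> 0}"
  obtain i where "i < n" "f i z \<ge> 0" using assms by (auto simp: feas_def not_less)
  then have ne: "?A \<noteq> {}" by blast
  have "Max ?A \<in> ?A" using ne fin_set by (rule Max_in[rotated])
  then show ?thesis using assms unfolding gridw_def by auto
qed

lemma safe_feas:
  assumes Lconst: "\<forall>i<n. \<forall>z. L i z > 0 \<and> (L i z)-lipschitz_on {z - emax .. z + emax} (f i)"
    and z: "z \<in> feas f n" and w1: "\<bar>w - z\<bar> \<le> emax" and w2: "\<bar>w - z\<bar> \<le> gridw f n L z" and i: "i < n"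
  shows "f i w \<le> 0"
proof -
  have L: "L i z > 0" and lip: "(L i z)-lipschitz_on {z - emax .. z + emax} (f i)" using Lconst i by auto
  have fz: "f i z < 0" using z i by (simp add: feas_def)
  have "dist (f i w) (f i z) \<le> L i z * dist w z"
    using w1 by (intro lipschitz_onD[OF lip]) (auto simp: abs_le_iff)
  also have "\<dots> \<le> L i z * (\<bar>f i z\<bar> / L i z)"
    using w2 gridw_feas_le[OF z i, of L] L by (intro mult_left_mono) (auto simp: dist_real_def)
  also have "\<dots> = \<bar>f i z\<bar>" using L by simp
  finally show ?thesis using fz by (simp add: dist_real_def)
qed

lemma safe_nonfeas:
  assumes Lconst: "\<forall>i<n. \<forall>z. L i z > 0 \<and> (L i z)-lipschitz_on {z - emax .. z + emax} (f i)"
    and z: "z \<notin> feas f n" and w1: "\<bar>w - z\<bar> \<le> emax" and w2: "\<bar>w - z\<bar> \<le> gridw f n L z"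
  shows "w \<notin> feas f n"
proof -
  obtain i where i: "i < n" and fz: "f i z \<ge> 0" and g: "gridw f n L z = \<bar>f i z\<bar> / L i z"
    using gridw_nonfeas[OF z] by blast
  have L: "L i z > 0" and lip: "(L i z)-lipschitz_on {z - emax .. z + emax} (f i)" using Lconst i by auto
  have "dist (f i w) (f i z) \<le> L i z * dist w z"
    using w1 by (intro lipschitz_onD[OF lip]) (auto simp: abs_le_iff)
  also have "\<dots> \<le> L i z * (\<bar>f i z\<bar> / L i z)"
    using w2 g L by (intro mult_left_mono) (auto simp: dist_real_def)
  also have "\<dots> = \<bar>f i z\<bar>" using L by simp
  finally have "f i w \<ge> 0" using fz by (simp add: dist_real_def)
  then show ?thesis using i by (auto simp: feas_def)
qed

lemma ivt_zero:
  assumes cont: "\<forall>i<n. \<forall>z. isCont (f i) z"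
    and z: "z \<in> feas f n" and w: "w \<notin> feas f n"
  shows "\<exists>q. (\<exists>i<n. f i q = 0) \<and> \<bar>w - q\<bar> \<le> \<bar>w - z\<bar> \<and> \<bar>z - q\<bar> \<le> \<bar>w - z\<bar>"
proof -
  obtain i where i: "i < n" and fw: "f i w \<ge> 0" using w by (auto simp: feas_def not_less)
  have fz: "f i z < 0" using z i by (simp add: feas_def)
  have c: "\<forall>x. isCont (f i) x" using cont i by auto
  show ?thesis
  proof (cases "z \<le> w")
    case True
    obtain q where "z \<le> q" "q \<le> w" "f i q = 0"
      using IVT[of "f i" z 0 w] fz fw True c by auto
    then show ?thesis using i by (intro exI[of _ q]) auto
  next
    case False
    obtain q where "w \<le> q" "q \<le> z" "f i q = 0"
      using IVT2[of "f i" z 0 w] fz fw False c by auto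
    then show ?thesis using i by (intro exI[of _ q]) auto
  qed
qed

lemma grid_pt_0: "grid_pt f n L emax emin S 0 = - S"
  by (simp add: grid_pt_def)

lemma grid_pt_Suc: "grid_pt f n L emax emin S (Suc j) =
   grid_pt f n L emax emin S j + min emax (max (gridw f n L (grid_pt f n L emax emin S j)) emin)"
  by (simp add: grid_pt_def)

lemma grid_pt_lower:
  assumes "0 < emin" "emin \<le> emax"
  shows "grid_pt f n L emax emin S j \<ge> - S + real j * emin"
proof (induction j)
  case 0 then show ?case by (simp add: grid_pt_0)
next
  case (Suc j)
  have "min emax (max (gridw f n L (grid_pt f n L emax emin S j)) emin) \<ge> emin" using assms by simp
  then show ?case using Suc by (simp add: grid_pt_Suc algebra_simps)
qed

lemma step_le: "\<not> min (a::real) (max d e) \<le> e \<Longrightarrow> min a (max d e) \<le> d"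
  by (auto simp: min_def max_def split: if_splits)

lemma sym_diff:
  fixes S :: real
  assumes Lconst: "\<forall>i<n. \<forall>z. L i z > 0 \<and> (L i z)-lipschitz_on {z - emax .. z + emax} (f i)"
    and cont: "\<forall>i<n. \<forall>z. isCont (f i) z"
    and e: "0 < emin" "emin \<le> emax"
    and zobs: "zobs \<in> feas f n"
  defines "D \<equiv> (\<Union>q\<in>{q. \<exists>i<n. f i q = 0}. {q - emin .. q + emin}) \<union> {w. S \<le> \<bar>w\<bar>}"
  shows "Zgrid f n L emax emin S zobs - feas f n \<subseteq> D" "feas f n - Zgrid f n L emax emin S zobs \<subseteq> D"
proof -
  let ?g = "grid_pt f n L emax emin S"
  let ?s = "\<lambda>z. min emax (max (gridw f n L z) emin)"
  have inQ: "w \<in> D" if h1: "\<forall>i<n. f i w \<le> 0" and h2: "w \<notin> feas f n" for w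
  proof -
    obtain i where "i < n" "\<not> f i w < 0" using h2 unfolding feas_def by blast
    then have "f i w = 0" using h1 by force
    moreover have "w \<in> {w - emin .. w + emin}" using e by simp
    ultimately have "w \<in> (\<Union>q\<in>{q. \<exists>i<n. f i q = 0}. {q - emin .. q + emin})" using \<open>i < n\<close> by blast
    then show ?thesis unfolding D_def by blast
  qed
  have nearQ: "w \<in> D" if "i < n" "f i q = 0" "\<bar>w - q\<bar> \<le> emin" for w q i
  proof -
    have "q \<in> {q. \<exists>i<n. f i q = 0}" "w \<in> {q - emin .. q + emin}" using that by (auto simp: abs_le_iff)
    then show ?thesis unfolding D_def by blast
  qed
  show "Zgrid f n L emax emin S zobs - feas f n \<subseteq> D"
  proof
    fix w assume w: "w \<in> Zgrid f n L emax emin S zobs - feas f n"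
    then have wn: "w \<notin> feas f n" by simp
    have "w \<in> (\<Union>j\<in>{j. ?g j < S \<and> ?g j \<in> feas f n}. {?g j .. ?g (Suc j)})
       \<or> w \<in> {zobs - min emax (gridw f n L zobs) .. zobs + min emax (gridw f n L zobs)}"
      using w unfolding Zgrid_def Let_def by blast
    then show "w \<in> D"
    proof
      assume "w \<in> (\<Union>j\<in>{j. ?g j < S \<and> ?g j \<in> feas f n}. {?g j .. ?g (Suc j)})"
      then obtain j where gj: "?g j \<in> feas f n" and w1: "?g j \<le> w" and w2': "w \<le> ?g (Suc j)"
        by auto
      have w2: "w \<le> ?g j + ?s (?g j)" using w2' by (simp only: grid_pt_Suc)
      show "w \<in> D"
      proof (cases "?s (?g j) \<le> emin")
        case True
        have h: "\<bar>w - ?g j\<bar> \<le> emin" using w1 w2 True by simp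
        obtain q i where "i < n" "f i q = 0" "\<bar>w - q\<bar> \<le> \<bar>w - ?g j\<bar>"
          using ivt_zero[OF cont gj wn] by blast
        then show ?thesis using h by (intro nearQ[of i q]) auto
      next
        case False
        then have a: "?s (?g j) \<le> gridw f n L (?g j)" by (rule step_le)
        have b: "?s (?g j) \<le> emax" by simp
        have c1: "\<bar>w - ?g j\<bar> \<le> emax" using w1 w2 b by simp
        have c2: "\<bar>w - ?g j\<bar> \<le> gridw f n L (?g j)" using w1 w2 a by simp
        have "\<forall>i<n. f i w \<le> 0"
          using safe_feas[OF Lconst gj c1 c2] by blast
        then show ?thesis using wn by (rule inQ)
      qed
    next
      assume "w \<in> {zobs - min emax (gridw f n L zobs) .. zobs + min emax (gridw f n L zobs)}"
      then have c1: "\<bar>w - zobs\<bar> \<le> emax" and c2: "\<bar>w - zobs\<bar> \<le> gridw f n L zobs"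
        by (auto simp: abs_le_iff min_def split: if_splits)
      have "\<forall>i<n. f i w \<le> 0"
        using safe_feas[OF Lconst zobs c1 c2] by blast
      then show ?thesis using wn by (rule inQ)
    qed
  qed
  show "feas f n - Zgrid f n L emax emin S zobs \<subseteq> D"
  proof
    fix w assume w: "w \<in> feas f n - Zgrid f n L emax emin S zobs"
    then have wf: "w \<in> feas f n" and wg: "w \<notin> Zgrid f n L emax emin S zobs" by auto
    show "w \<in> D"
    proof (cases "S \<le> \<bar>w\<bar>")
      case True then show ?thesis unfolding D_def by blast
    next
      case False
      then have wS: "- S < w" "w < S" by auto
      let ?J = "{j. ?g j \<le> w}"
      obtain N :: nat where N: "real N > (w + S) / emin" using reals_Archimedean2 by blast
      have finJ: "finite ?J"
      proof (rule finite_subset[of _ "{..<N}"])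
        show "?J \<subseteq> {..<N}"
        proof
          fix j assume "j \<in> ?J"
          then have "- S + real j * emin \<le> w" using grid_pt_lower[OF e, where f=f and n=n and L=L and S=S and j=j] by simp
          then have "real j \<le> (w + S) / emin" using e by (simp add: le_divide_eq algebra_simps)
          then show "j \<in> {..<N}" using N by simp
        qed
      qed simp
      have "0 \<in> ?J" using wS by (simp add: grid_pt_0)
      define j where "j = Max ?J"
      have jJ: "j \<in> ?J" unfolding j_def using finJ \<open>0 \<in> ?J\<close> by (intro Max_in) auto
      have "Suc j \<notin> ?J"
      proof
        assume "Suc j \<in> ?J"
        then have "Suc j \<le> j" unfolding j_def using finJ by (rule Max_ge[rotated])
        then show False by simp
      qed
      then have w2': "w < ?g (Suc j)" by simp
      have w1: "?g j \<le> w" using jJ by simp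
      have w2: "w < ?g j + ?s (?g j)" using w2' by (simp only: grid_pt_Suc)
      have gn: "?g j \<notin> feas f n"
      proof
        assume gf: "?g j \<in> feas f n"
        have "?g j < S" using w1 wS by simp
        then have "j \<in> {j. ?g j < S \<and> ?g j \<in> feas f n}" using gf by simp
        moreover have "w \<in> {?g j .. ?g (Suc j)}" using w1 w2' by simp
        ultimately have "w \<in> (\<Union>j\<in>{j. ?g j < S \<and> ?g j \<in> feas f n}. {?g j .. ?g (Suc j)})"
          by blast
        then show False using wg by (simp add: Zgrid_def)
      qed
      show ?thesis
      proof (cases "?s (?g j) \<le> emin")
        case True
        have h: "\<bar>w - ?g j\<bar> \<le> emin" using w1 w2 True by simp
        obtain q i where "i < n" "f i q = 0" "\<bar>w - q\<bar> \<le> \<bar>?g j - w\<bar>"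
          using ivt_zero[OF cont wf gn] by blast
        then show ?thesis using h by (intro nearQ[of i q]) (auto simp: abs_minus_commute)
      next
        case False
        then have a: "?s (?g j) \<le> gridw f n L (?g j)" by (rule step_le)
        have b: "?s (?g j) \<le> emax" by simp
        have c1: "\<bar>?g j - w\<bar> \<le> emax" using w1 w2 b by simp
        have c2: "\<bar>?g j - w\<bar> \<le> gridw f n L (?g j)" using w1 w2 a by simp
        have "?g j \<notin> feas f n" by (rule gn)
        have "\<bar>w - ?g j\<bar> \<le> emax" "\<bar>w - ?g j\<bar> \<le> gridw f n L (?g j)" using c1 c2 by (simp_all add: abs_minus_commute)
        then have "w \<notin> feas f n" by (rule safe_nonfeas[OF Lconst gn])
        then show ?thesis using wf by simp
      qed
    qed
  qed
qed



theorem theorem2: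
  fixes f L :: "nat \<Rightarrow> real \<Rightarrow> real" and n :: nat and zobs emax :: real
  assumes n_pos: "n \<ge> 1"
    and diff: "\<forall>i<n. \<forall>z. f i differentiable (at z)"
    and lip: "\<forall>i<n. \<exists>K. K-lipschitz_on UNIV (f i)"
    and fin_zeros: "\<forall>i<n. finite {z. f i z = 0}"
    and nondeg: "\<forall>i<n. \<forall>q. f i q = 0 \<longrightarrow> deriv (f i) q \<noteq> 0"
    and zobs: "zobs \<in> feas f n"
    and emax: "emax > 0"
    and Lconst: "\<forall>i<n. \<forall>z. L i z > 0 \<and> (L i z)-lipschitz_on {z - emax .. z + emax} (f i)"
  shows "\<exists>C>0. \<exists>e0>0. \<exists>S0>0. \<forall>emin S. 0 < emin \<and> emin \<le> emax \<and> emin < e0 \<and> S > S0 \<longrightarrow>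
           \<bar>p_selective f n zobs - p_grid f n L emax emin S zobs\<bar>
             \<le> C * (emin + exp (- (S\<^sup>2) / 2))"
proof -
  interpret prob_space gauss by (rule gauss_prob)
  have cont: "\<forall>i<n. \<forall>z. isCont (f i) z"
    using diff by (auto intro: differentiable_imp_continuous_within)
  have feas_eq: "feas f n = (\<Inter>i\<in>{..<n}. {z. f i z < 0})" by (auto simp: feas_def)
  have Zopen: "open (feas f n)" unfolding feas_eq
  proof (rule open_INT)
    show "finite {..<n}" by simp
    show "\<forall>i\<in>{..<n}. open {z. f i z < 0}"
    proof
      fix i assume "i \<in> {..<n}"
      then have "continuous_on UNIV (f i)" using cont by (auto intro: continuous_at_imp_continuous_on)
      then show "open {z. f i z < 0}" by (intro open_Collect_less) auto
    qed
  qed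
  then have Zmeas: "feas f n \<in> sets borel" by (rule borel_open)
  obtain ep where ep: "ep > 0" "ball zobs ep \<subseteq> feas f n"
    using Zopen zobs open_contains_ball by blast
  have "{zobs - ep/2 .. zobs + ep/2} \<subseteq> feas f n"
    using ep by (auto simp: dist_real_def subset_iff abs_le_iff)
  then have "measure gauss {zobs - ep/2 .. zobs + ep/2} \<le> measure gauss (feas f n)"
    using Zmeas by (intro finite_measure_mono) auto
  moreover have "measure gauss {zobs - ep/2 .. zobs + ep/2} > 0"
    using ep by (intro gauss_interval_pos) auto
  ultimately have b1: "measure gauss (feas f n) > 0" by linarith
  define Q where "Q = {q. \<exists>i<n. f i q = 0}"
  have "Q = (\<Union>i\<in>{..<n}. {z. f i z = 0})" unfolding Q_def by auto
  then have finQ: "finite Q" using fin_zeros by auto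
  define N where "N = card Q"
  define b where "b = measure gauss (feas f n)"
  define C where "C = (4 * real N + 4) / b"
  have C0: "C > 0" unfolding C_def b_def using b1 by simp
  have main: "\<forall>emin S. 0 < emin \<and> emin \<le> emax \<and> emin < 1 \<and> S > 1 \<longrightarrow>
           \<bar>p_selective f n zobs - p_grid f n L emax emin S zobs\<bar>
             \<le> C * (emin + exp (- (S\<^sup>2) / 2))"
  proof (intro allI impI)
    fix emin S :: real
    assume h: "0 < emin \<and> emin \<le> emax \<and> emin < 1 \<and> S > 1"
    then have e: "0 < emin" "emin \<le> emax" and S: "S \<ge> 1" by auto
    define D where "D = (\<Union>q\<in>Q. {q - emin .. q + emin}) \<union> {w. S \<le> \<bar>w\<bar>}"
    note sd = sym_diff[OF Lconst cont e zobs, of S]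
    have sd1: "Zgrid f n L emax emin S zobs - feas f n \<subseteq> D" using sd(1) unfolding D_def Q_def .
    have sd2: "feas f n - Zgrid f n L emax emin S zobs \<subseteq> D" using sd(2) unfolding D_def Q_def .
    have Dmeas1: "(\<Union>q\<in>Q. {q - emin .. q + emin}) \<in> sets borel" using finQ by auto
    have Dmeas2: "{w::real. S \<le> \<bar>w\<bar>} \<in> sets borel" by measurable
    have Dmeas: "D \<in> sets borel" unfolding D_def using Dmeas1 Dmeas2 by auto
    have Gmeas: "Zgrid f n L emax emin S zobs \<in> sets borel"
      unfolding Zgrid_def Let_def by (intro sets.Un sets.countable_UN') auto
    have "measure gauss D \<le> measure gauss (\<Union>q\<in>Q. {q - emin .. q + emin}) + measure gauss {w. S \<le> \<bar>w\<bar>}"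
      unfolding D_def using Dmeas1 Dmeas2 by (intro measure_Un_le) auto
    also have "measure gauss (\<Union>q\<in>Q. {q - emin .. q + emin}) \<le> (\<Sum>q\<in>Q. measure gauss {q - emin .. q + emin})"
      using finQ by (intro measure_UNION_le) auto
    also have "\<dots> \<le> real N * (2 * emin)"
    proof -
      have "measure gauss {q - emin .. q + emin} \<le> 2 * emin" for q
        using e gauss_interval[of "q - emin" "q + emin"] by simp
      then show ?thesis unfolding N_def by (intro sum_bounded_above) auto
    qed
    also have "measure gauss {w. S \<le> \<bar>w\<bar>} \<le> 2 * exp (- (S\<^sup>2) / 2)" by (rule tail_gauss[OF S])
    finally have mD: "measure gauss D \<le> real N * (2 * emin) + 2 * exp (- (S\<^sup>2) / 2)" by simp
    have "\<bar>p_selective f n zobs - p_grid f n L emax emin S zobs\<bar> \<le> 2 * measure gauss D / b"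
      unfolding p_selective_def p_grid_def b_def
      by (rule cond_prob_diff[OF Zmeas Gmeas Dmeas sd2 sd1 b1])
    also have "\<dots> \<le> 2 * (real N * (2 * emin) + 2 * exp (- (S\<^sup>2) / 2)) / b"
      using mD b1 unfolding b_def by (intro divide_right_mono) auto
    also have "\<dots> \<le> C * (emin + exp (- (S\<^sup>2) / 2))"
    proof -
      have "2 * (real N * (2 * emin) + 2 * exp (- (S\<^sup>2) / 2)) \<le> (4 * real N + 4) * (emin + exp (- (S\<^sup>2) / 2))"
        using e by (simp add: algebra_simps)
      then have "2 * (real N * (2 * emin) + 2 * exp (- (S\<^sup>2) / 2)) / b \<le> (4 * real N + 4) * (emin + exp (- (S\<^sup>2) / 2)) / b"
        using b1 unfolding b_def by (intro divide_right_mono) auto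
      then show ?thesis unfolding C_def by simp
    qed
    finally show "\<bar>p_selective f n zobs - p_grid f n L emax emin S zobs\<bar> \<le> C * (emin + exp (- (S\<^sup>2) / 2))" .
  qed
  show ?thesis using C0 main zero_less_one by blast
qed


end
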